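(* Let $n\ge2$, $\omega\in\mathbb{R}^n$, $k\in\mathbb{R}_{>0}^n$ satisfy (IC1) $\sum_\mu\omega_\mu=0$, (IC2) $\omega\ne0$, (IC3) $\left|\frac{\omega_1}{k_1}\right|\le\cdots\le\left|\frac{\omega_n}{k_n}\right|$. Let $\sigma\in\{-1,+1\}^n$, $\sigma_+=\{\mu:\sigma_\mu=+1\}$, and $f_\sigma(R)=-R+\frac1n\sum_{\mu=1}^n\sigma_\mu\sqrt{k_\mu^2R-\omega_\mu^2}$. Then every positive root of $f_\sigma$ lies in the interval $$\left[\left(\frac{\omega_n}{k_n}\right)^2,\ \left(\frac1n\sum_{\mu\in\sigma_+}k_\mu\right)^2\right].$$
   Context: Square roots are nonnegative real square roots; a positive root of $f_\sigma$ is a real $R>0$ with $k_\mu^2R-\omega_\mu^2\ge0$ for all $\mu$ and $f_\sigma(R)=0$. *)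

theory Defs
  imports Complex_Main
begin

definition f_sigma :: "nat \<Rightarrow> (nat \<Rightarrow> real) \<Rightarrow> (nat \<Rightarrow> real) \<Rightarrow> (nat \<Rightarrow> int) \<Rightarrow> real \<Rightarrow> real" where
  "f_sigma n \<omega> k \<sigma> R = - R + (1 / real n) * (\<Sum>\<mu>=1..n. of_int (\<sigma> \<mu>) * sqrt ((k \<mu>)\<^sup>2 * R - (\<omega> \<mu>)\<^sup>2))"

definition positive_root :: "nat \<Rightarrow> (nat \<Rightarrow> real) \<Rightarrow> (nat \<Rightarrow> real) \<Rightarrow> (nat \<Rightarrow> int) \<Rightarrow> real \<Rightarrow> bool" where
  "positive_root n \<omega> k \<sigma> R \<longleftrightarrow> R > 0 \<and> (\<forall>\<mu>\<in>{1..n}. (k \<mu>)\<^sup>2 * R - (\<omega> \<mu>)\<^sup>2 \<ge> 0) \<and> f_sigma n \<omega> k \<sigma> R = 0"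

end

theory Submission
  imports Defs
begin

theorem proposition1:
  fixes n :: nat and \<omega> k :: "nat \<Rightarrow> real" and \<sigma> :: "nat \<Rightarrow> int" and R :: real
  assumes n2: "n \<ge> 2"
    and kpos: "\<forall>\<mu>\<in>{1..n}. k \<mu> > 0"
    and IC1: "(\<Sum>\<mu>=1..n. \<omega> \<mu>) = 0"
    and IC2: "\<exists>\<mu>\<in>{1..n}. \<omega> \<mu> \<noteq> 0"
    and IC3: "\<forall>\<mu>\<in>{1..n}. \<forall>\<nu>\<in>{1..n}. \<mu> \<le> \<nu> \<longrightarrow> \<bar>\<omega> \<mu> / k \<mu>\<bar> \<le> \<bar>\<omega> \<nu> / k \<nu>\<bar>"
    and sig: "\<forall>\<mu>\<in>{1..n}. \<sigma> \<mu> \<in> {-1, 1}"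
    and root: "positive_root n \<omega> k \<sigma> R"
  shows "(\<omega> n / k n)\<^sup>2 \<le> R \<and> R \<le> ((1 / real n) * (\<Sum>\<mu>\<in>{\<mu>\<in>{1..n}. \<sigma> \<mu> = 1}. k \<mu>))\<^sup>2"
proof -
  have Rpos: "R > 0" and nn: "\<forall>\<mu>\<in>{1..n}. (k \<mu>)\<^sup>2 * R - (\<omega> \<mu>)\<^sup>2 \<ge> 0"
    and f0: "f_sigma n \<omega> k \<sigma> R = 0" using root unfolding positive_root_def by auto
  have nin: "n \<in> {1..n}" using n2 by auto
  have kn: "k n > 0" using kpos nin by auto
  have "(\<omega> n)\<^sup>2 \<le> (k n)\<^sup>2 * R" using nn nin by auto
  hence low: "(\<omega> n / k n)\<^sup>2 \<le> R" using kn by (simp add: power_divide divide_le_eq mult.commute)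
  define S where "S = (1 / real n) * (\<Sum>\<mu>\<in>{\<mu>\<in>{1..n}. \<sigma> \<mu> = 1}. k \<mu>)"
  have tm: "of_int (\<sigma> \<mu>) * sqrt ((k \<mu>)\<^sup>2 * R - (\<omega> \<mu>)\<^sup>2) \<le> (if \<sigma> \<mu> = 1 then k \<mu> * sqrt R else 0)"
    if m: "\<mu> \<in> {1..n}" for \<mu>
  proof (cases "\<sigma> \<mu> = 1")
    case True
    have "sqrt ((k \<mu>)\<^sup>2 * R - (\<omega> \<mu>)\<^sup>2) \<le> sqrt ((k \<mu>)\<^sup>2 * R)" by (rule real_sqrt_le_mono) simp
    also have "\<dots> = k \<mu> * sqrt R" using kpos m by (simp add: real_sqrt_mult less_imp_le)
    finally show ?thesis using True by simp
  next
    case False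
    then have "\<sigma> \<mu> = -1" using sig m by auto
    then show ?thesis using nn m by simp
  qed
  have "(\<Sum>\<mu>=1..n. of_int (\<sigma> \<mu>) * sqrt ((k \<mu>)\<^sup>2 * R - (\<omega> \<mu>)\<^sup>2))
        \<le> (\<Sum>\<mu>=1..n. (if \<sigma> \<mu> = 1 then k \<mu> * sqrt R else 0))"
    by (rule sum_mono) (use tm in auto)
  also have "\<dots> = (\<Sum>\<mu>\<in>{\<mu>\<in>{1..n}. \<sigma> \<mu> = 1}. k \<mu> * sqrt R)"
    by (rule sum.inter_filter[symmetric]) simp
  also have "\<dots> = sqrt R * (\<Sum>\<mu>\<in>{\<mu>\<in>{1..n}. \<sigma> \<mu> = 1}. k \<mu>)"
    by (simp add: sum_distrib_left mult.commute)
  finally have A: "(\<Sum>\<mu>=1..n. of_int (\<sigma> \<mu>) * sqrt ((k \<mu>)\<^sup>2 * R - (\<omega> \<mu>)\<^sup>2)) \<le> sqrt R * (\<Sum>\<mu>\<in>{\<mu>\<in>{1..n}. \<sigma> \<mu> = 1}. k \<mu>)" .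
  have "R = (1 / real n) * (\<Sum>\<mu>=1..n. of_int (\<sigma> \<mu>) * sqrt ((k \<mu>)\<^sup>2 * R - (\<omega> \<mu>)\<^sup>2))"
    using f0 unfolding f_sigma_def by simp
  also have "\<dots> \<le> (1 / real n) * (sqrt R * (\<Sum>\<mu>\<in>{\<mu>\<in>{1..n}. \<sigma> \<mu> = 1}. k \<mu>))"
    using A n2 by (intro mult_left_mono) auto
  also have "\<dots> = sqrt R * S" unfolding S_def by simp
  finally have "R \<le> sqrt R * S" .
  moreover have "sqrt R * sqrt R = R" using Rpos by simp
  ultimately have "sqrt R * sqrt R \<le> sqrt R * S" by simp
  hence sS: "sqrt R \<le> S" using Rpos by (metis mult_le_cancel_left_pos real_sqrt_gt_zero)
  have "R = (sqrt R)\<^sup>2" using Rpos by simp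
  also have "\<dots> \<le> S\<^sup>2" using sS Rpos by (intro power_mono) auto
  finally show ?thesis using low unfolding S_def by simp
qed

end
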